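(* Let $(\xi_i,\mathcal{F}_i)_{i=0,\dots,n}$ be a sequence of real-valued martingale differences (with $\mathbf{E}[\xi_i\mid\mathcal{F}_{i-1}]=0$). Let $p\ge2$ and assume $\mathbf{E}[|\xi_i|^p]<\infty$ for all $i\in[1,n]$. For $y>0$ set $\eta_i=\xi_i\mathbf{1}_{\{\xi_i\le y\}}$. Then for all $\lambda>0$ and $i\in[1,n]$, $$\mathbf{E}[e^{\lambda\eta_i}\mid\mathcal{F}_{i-1}]\le1+\frac12e^p\lambda^2\,\mathbf{E}[\xi_i^2\mid\mathcal{F}_{i-1}]+f(y)\,\mathbf{E}[(\xi_i^+)^p\mid\mathcal{F}_{i-1}],$$ where $f(u)=\dfrac{e^{\lambda u}-1-\lambda u}{u^p}$ for $u>0$.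
   Context: $x^+=\max\{x,0\}$. *)

theory Defs
  imports "HOL-Probability.Probability"
begin

definition mgf_f :: "real \<Rightarrow> real \<Rightarrow> real \<Rightarrow> real" where
  "mgf_f lam p u = (exp (lam * u) - 1 - lam * u) / u powr p"

end

theory Submission
  imports Defs
begin

lemma exp_neg_quad: fixes x :: real assumes "x \<le> 0" shows "exp x \<le> 1 + x + x^2/2"
proof (cases "x = 0")
  case True then show ?thesis by simp
next
  case False
  with assms have "x < 0" by simp
  from Maclaurin_minus[OF this, where n=2 and f=exp and diff="\<lambda>n. exp"] obtain t where
    t: "x < t" "t < 0" "exp x = (\<Sum>m<2. exp 0 / fact m * x ^ m) + exp t / fact 2 * x ^ 2"
    by (auto intro: DERIV_exp)
  have "exp t \<le> 1" using t by simp
  hence "exp t * x^2 \<le> 1 * x^2" by (intro mult_right_mono) auto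
  hence "exp t / 2 * x^2 \<le> x^2/2" by simp
  moreover have "(\<Sum>m<2. exp 0 / fact m * x ^ m) = 1 + x" by (simp add: numeral_2_eq_2)
  ultimately show ?thesis using t(3) by simp
qed

lemma exp_pos_quad: fixes x p :: real assumes "0 \<le> x" "x \<le> p" shows "exp x \<le> 1 + x + exp p * x^2/2"
proof -
  from Maclaurin_exp_le[of x 2] obtain t where
    t: "\<bar>t\<bar> \<le> \<bar>x\<bar>" "exp x = (\<Sum>m<2. x ^ m / fact m) + exp t / fact 2 * x ^ 2" by blast
  have "exp t \<le> exp p" using t assms by simp
  hence "exp t / 2 * x^2 \<le> exp p * x^2/2" by (simp add: mult_right_mono)
  moreover have "(\<Sum>m<2. x ^ m / fact m) = 1 + x" by (simp add: numeral_2_eq_2)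
  ultimately show ?thesis using t(2) by simp
qed

lemma g_mono: fixes p a b :: real assumes "0 < p" "p \<le> a" "a \<le> b"
  shows "(exp a - 1 - a) / a powr p \<le> (exp b - 1 - b) / b powr p"
proof (rule DERIV_nonneg_imp_nondecreasing[OF assms(3)])
  fix x assume x: "a \<le> x" "x \<le> b"
  hence xp: "x > 0" "x \<ge> p" using assms by auto
  have D: "((\<lambda>x. (exp x - 1 - x) / x powr p) has_real_derivative
     ((exp x - 1) * x powr p - (exp x - 1 - x) * (p * x powr (p - 1))) / (x powr p * x powr p)) (at x)"
    using xp by (auto intro!: derivative_eq_intros)
  have e1: "exp x \<ge> 1" using xp by simp
  have k: "p * (exp x - 1 - x) \<le> x * (exp x - 1)"
  proof -
    have h1: "(x - p) * (exp x - 1) \<ge> 0" using e1 xp by simp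
    have h2: "p * x \<ge> 0" using xp assms by simp
    have "x * (exp x - 1) - p * (exp x - 1 - x) = (x - p) * (exp x - 1) + p * x"
      by (simp add: algebra_simps)
    thus ?thesis using h1 h2 by linarith
  qed
  have pw: "x powr (p-1) \<ge> 0" by simp
  have "(exp x - 1 - x) * (p * x powr (p - 1)) = (p * (exp x - 1 - x)) * x powr (p - 1)"
    by (simp add: algebra_simps)
  also have "\<dots> \<le> (x * (exp x - 1)) * x powr (p - 1)"
    using k pw by (rule mult_right_mono)
  also have "\<dots> = (exp x - 1) * (x * x powr (p - 1))" by (simp add: algebra_simps)
  also have "x * x powr (p - 1) = x powr p" using xp by (simp add: powr_mult_base)
  finally have num: "(exp x - 1 - x) * (p * x powr (p - 1)) \<le> (exp x - 1) * x powr p" .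
  have "0 \<le> ((exp x - 1) * x powr p - (exp x - 1 - x) * (p * x powr (p - 1))) / (x powr p * x powr p)"
    using num by (intro divide_nonneg_nonneg) auto
  thus "\<exists>y. ((\<lambda>x. (exp x - 1 - x) / x powr p) has_real_derivative y) (at x) \<and> 0 \<le> y"
    using D by blast
qed

lemma mgf_nonneg: "lam > 0 \<Longrightarrow> y > 0 \<Longrightarrow> mgf_f lam p y \<ge> 0"
proof -
  assume "lam > 0" "y > 0"
  have "exp (lam*y) - 1 - lam*y \<ge> 0" using exp_ge_add_one_self[of "lam*y"] by linarith
  thus ?thesis unfolding mgf_f_def by simp
qed

lemma pointwise:
  fixes lam p y z :: real assumes lam: "lam > 0" and y: "y > 0" and p: "p \<ge> 2"
  shows "exp (lam * (z * (if z \<le> y then 1 else 0)))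
     \<le> 1 + lam * z + 1/2 * exp p * lam\<^sup>2 * z\<^sup>2 + mgf_f lam p y * (max z 0) powr p"
proof -
  have c3: "mgf_f lam p y * (max z 0) powr p \<ge> 0" using mgf_nonneg[OF lam y] by simp
  have ep: "exp p \<ge> 1" using p by simp
  have c2: "1/2 * exp p * lam\<^sup>2 * z\<^sup>2 \<ge> 0" by simp
  consider "z > y" | "z \<le> 0" | "0 < z" "z \<le> y" "lam * z \<le> p" | "0 < z" "z \<le> y" "lam * z > p"
    by linarith
  then show ?thesis
  proof cases
    case 1
    then show ?thesis using c2 c3 lam y by (simp add: add_nonneg_nonneg)
  next
    case 2
    have "exp (lam*z) \<le> 1 + lam*z + (lam*z)^2/2" using exp_neg_quad[of "lam*z"] 2 lam
      by (simp add: mult_nonneg_nonpos)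
    moreover have "(lam*z)^2/2 \<le> 1/2 * exp p * lam\<^sup>2 * z\<^sup>2"
    proof -
      have "1 * (lam^2*z^2) \<le> exp p * (lam^2*z^2)" using ep by (intro mult_right_mono) auto
      thus ?thesis by (simp add: power_mult_distrib mult.assoc)
    qed
    ultimately show ?thesis using 2 y by simp
  next
    case 3
    have "exp (lam*z) \<le> 1 + lam*z + exp p * (lam*z)^2/2" using exp_pos_quad[of "lam*z" p] 3 lam by simp
    then show ?thesis using 3 c3 by (simp add: power_mult_distrib)
  next
    case 4
    have pp: "p > 0" using p by simp
    have "(exp (lam*z) - 1 - lam*z) / (lam*z) powr p \<le> (exp (lam*y) - 1 - lam*y) / (lam*y) powr p"
      using g_mono[OF pp, of "lam*z" "lam*y"] 4 lam by simp
    moreover have "(lam*z) powr p > 0" "(lam*y) powr p > 0" using 4 lam y by auto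
    ultimately have "exp (lam*z) - 1 - lam*z \<le> (exp (lam*y) - 1 - lam*y) / (lam*y) powr p * (lam*z) powr p"
      by (simp add: divide_le_eq)
    also have "\<dots> = mgf_f lam p y * z powr p"
      using 4 lam y by (simp add: mgf_f_def powr_mult)
    finally have "exp (lam*z) - 1 - lam*z \<le> mgf_f lam p y * z powr p" .
    moreover have "mgf_f lam p y * (max z 0) powr p = mgf_f lam p y * z powr p" using 4 by simp
    moreover have "exp (lam * (z * (if z \<le> y then 1 else 0))) = exp (lam * z)" using 4 by simp
    ultimately show ?thesis using c2 by linarith
  qed
qed


theorem lemma5p1:
  fixes M :: "'a measure" and F :: "nat \<Rightarrow> 'a measure"
    and \<xi> :: "nat \<Rightarrow> 'a \<Rightarrow> real" and n :: nat and p y lam :: real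
  assumes "prob_space M"
    and subalg: "\<And>i. i \<le> n \<Longrightarrow> sigma_finite_subalgebra M (F i)"
    and filt: "\<And>i j. i \<le> j \<Longrightarrow> j \<le> n \<Longrightarrow> sets (F i) \<subseteq> sets (F j)"
    and adapted: "\<And>i. i \<le> n \<Longrightarrow> \<xi> i \<in> borel_measurable (F i)"
    and integ: "\<And>i. i \<le> n \<Longrightarrow> integrable M (\<xi> i)"
    and mdiff: "\<And>i. i \<in> {1..n} \<Longrightarrow> AE x in M. real_cond_exp M (F (i - 1)) (\<xi> i) x = 0"
    and p: "p \<ge> 2"
    and moment: "\<And>i. i \<in> {1..n} \<Longrightarrow> integrable M (\<lambda>x. \<bar>\<xi> i x\<bar> powr p)"
    and y: "y > 0"
    and lam: "lam > 0"
    and i: "i \<in> {1..n}"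
  shows "AE x in M.
           real_cond_exp M (F (i - 1))
             (\<lambda>\<omega>. exp (lam * (\<xi> i \<omega> * (if \<xi> i \<omega> \<le> y then 1 else 0)))) x
         \<le> 1 + 1/2 * exp p * lam\<^sup>2 * real_cond_exp M (F (i - 1)) (\<lambda>\<omega>. (\<xi> i \<omega>)\<^sup>2) x
             + mgf_f lam p y * real_cond_exp M (F (i - 1)) (\<lambda>\<omega>. (max (\<xi> i \<omega>) 0) powr p) x"
proof -
  interpret P: prob_space M by fact
  have i1: "i - 1 \<le> n" using i by auto
  interpret S: sigma_finite_subalgebra M "F (i - 1)" using subalg[OF i1] .
  have in_: "i \<le> n" using i by auto
  have xi_int: "integrable M (\<xi> i)" using integ[OF in_] .
  have xi_meas[measurable]: "\<xi> i \<in> borel_measurable M" using xi_int by (rule borel_measurable_integrable)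
  have pow_int: "integrable M (\<lambda>x. \<bar>\<xi> i x\<bar> powr p)" using moment[OF i] .
  define E where "E = (\<lambda>\<omega>. exp (lam * (\<xi> i \<omega> * (if \<xi> i \<omega> \<le> y then 1 else 0))))"
  define c2 where "c2 = 1/2 * exp p * lam\<^sup>2"
  define c3 where "c3 = mgf_f lam p y"
  define Q where "Q = (\<lambda>\<omega>. (\<xi> i \<omega>)\<^sup>2)"
  define Pp where "Pp = (\<lambda>\<omega>. (max (\<xi> i \<omega>) 0) powr p)"
  have E_meas: "E \<in> borel_measurable M" unfolding E_def by measurable
  have E_int: "integrable M E"
  proof (rule Bochner_Integration.integrable_bound[OF P.integrable_const[of "exp (lam*y)"] E_meas])
    show "AE x in M. norm (E x) \<le> norm (exp (lam * y))"
    proof (rule AE_I2)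
      fix x
      have "lam * (\<xi> i x * (if \<xi> i x \<le> y then 1 else 0)) \<le> lam * y"
        using lam y by (intro mult_left_mono) auto
      thus "norm (E x) \<le> norm (exp (lam * y))" unfolding E_def by simp
    qed
  qed
  have Q_int: "integrable M Q"
  proof (rule Bochner_Integration.integrable_bound[OF Bochner_Integration.integrable_add[OF P.integrable_const[of 1] pow_int]])
    show "Q \<in> borel_measurable M" unfolding Q_def by measurable
    show "AE x in M. norm (Q x) \<le> norm (1 + \<bar>\<xi> i x\<bar> powr p)"
    proof (rule AE_I2)
      fix x
      have "\<bar>\<xi> i x\<bar>^2 \<le> 1 + \<bar>\<xi> i x\<bar> powr p"
      proof (cases "\<bar>\<xi> i x\<bar> \<le> 1")
        case True
        hence "\<bar>\<xi> i x\<bar>^2 \<le> 1" by (simp add: abs_square_le_1)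
        moreover have "\<bar>\<xi> i x\<bar> powr p \<ge> 0" by simp
        ultimately show ?thesis by linarith
      next
        case False
        hence "\<bar>\<xi> i x\<bar> powr 2 \<le> \<bar>\<xi> i x\<bar> powr p" using p by (intro powr_mono) auto
        moreover have "\<bar>\<xi> i x\<bar> powr 2 = \<bar>\<xi> i x\<bar>^2" using False by (simp add: powr_numeral)
        ultimately show ?thesis by linarith
      qed
      moreover have "1 + \<bar>\<xi> i x\<bar> powr p \<ge> 0" by (simp add: add_nonneg_nonneg)
      ultimately show "norm (Q x) \<le> norm (1 + \<bar>\<xi> i x\<bar> powr p)" unfolding Q_def by simp
    qed
  qed
  have Pp_int: "integrable M Pp"
  proof (rule Bochner_Integration.integrable_bound[OF pow_int])
    show "Pp \<in> borel_measurable M" unfolding Pp_def by measurable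
    show "AE x in M. norm (Pp x) \<le> norm (\<bar>\<xi> i x\<bar> powr p)"
    proof (rule AE_I2)
      fix x
      have "(max (\<xi> i x) 0) powr p \<le> \<bar>\<xi> i x\<bar> powr p" using p by (intro powr_mono2) auto
      thus "norm (Pp x) \<le> norm (\<bar>\<xi> i x\<bar> powr p)" unfolding Pp_def by simp
    qed
  qed
  define R where "R = (\<lambda>\<omega>. 1 + lam * \<xi> i \<omega> + c2 * Q \<omega> + c3 * Pp \<omega>)"
  have int1: "integrable M (\<lambda>\<omega>. lam * \<xi> i \<omega>)" using xi_int by simp
  have int2: "integrable M (\<lambda>\<omega>. c2 * Q \<omega>)" using Q_int by simp
  have int3: "integrable M (\<lambda>\<omega>. c3 * Pp \<omega>)" using Pp_int by simp
  have int0: "integrable M (\<lambda>\<omega>. 1::real)" by simp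
  have int01: "integrable M (\<lambda>\<omega>. 1 + lam * \<xi> i \<omega>)" using int0 int1 by (rule Bochner_Integration.integrable_add)
  have int012: "integrable M (\<lambda>\<omega>. 1 + lam * \<xi> i \<omega> + c2 * Q \<omega>)" using int01 int2 by (rule Bochner_Integration.integrable_add)
  have R_int: "integrable M R" unfolding R_def using int012 int3 by (rule Bochner_Integration.integrable_add)
  have mono: "AE x in M. real_cond_exp M (F (i - 1)) E x \<le> real_cond_exp M (F (i - 1)) R x"
    by (rule S.real_cond_exp_mono[OF _ E_int R_int])
       (rule AE_I2, unfold E_def R_def c2_def c3_def Q_def Pp_def, rule pointwise[OF lam y p])
  have a1: "AE x in M. real_cond_exp M (F (i - 1)) R x = real_cond_exp M (F (i - 1)) (\<lambda>\<omega>. 1 + lam * \<xi> i \<omega> + c2 * Q \<omega>) x + real_cond_exp M (F (i - 1)) (\<lambda>\<omega>. c3 * Pp \<omega>) x"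
    unfolding R_def by (rule S.real_cond_exp_add[OF int012 int3])
  have a2: "AE x in M. real_cond_exp M (F (i - 1)) (\<lambda>\<omega>. 1 + lam * \<xi> i \<omega> + c2 * Q \<omega>) x = real_cond_exp M (F (i - 1)) (\<lambda>\<omega>. 1 + lam * \<xi> i \<omega>) x + real_cond_exp M (F (i - 1)) (\<lambda>\<omega>. c2 * Q \<omega>) x"
    by (rule S.real_cond_exp_add[OF int01 int2])
  have a3: "AE x in M. real_cond_exp M (F (i - 1)) (\<lambda>\<omega>. 1 + lam * \<xi> i \<omega>) x = real_cond_exp M (F (i - 1)) (\<lambda>\<omega>. 1) x + real_cond_exp M (F (i - 1)) (\<lambda>\<omega>. lam * \<xi> i \<omega>) x"
    by (rule S.real_cond_exp_add[OF int0 int1])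
  have a4: "AE x in M. real_cond_exp M (F (i - 1)) (\<lambda>\<omega>. 1) x = 1"
    by (rule S.real_cond_exp_F_meas[OF int0]) simp
  have a5: "AE x in M. real_cond_exp M (F (i - 1)) (\<lambda>\<omega>. lam * \<xi> i \<omega>) x = lam * real_cond_exp M (F (i - 1)) (\<xi> i) x"
    by (rule S.real_cond_exp_cmult[OF xi_int])
  have a6: "AE x in M. real_cond_exp M (F (i - 1)) (\<lambda>\<omega>. c2 * Q \<omega>) x = c2 * real_cond_exp M (F (i - 1)) Q x"
    by (rule S.real_cond_exp_cmult[OF Q_int])
  have a7: "AE x in M. real_cond_exp M (F (i - 1)) (\<lambda>\<omega>. c3 * Pp \<omega>) x = c3 * real_cond_exp M (F (i - 1)) Pp x"
    by (rule S.real_cond_exp_cmult[OF Pp_int])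
  have a8: "AE x in M. real_cond_exp M (F (i - 1)) (\<xi> i) x = 0" using mdiff[OF i] .
  have "AE x in M. real_cond_exp M (F (i - 1)) E x \<le> 1 + c2 * real_cond_exp M (F (i - 1)) Q x + c3 * real_cond_exp M (F (i - 1)) Pp x"
    using mono a1 a2 a3 a4 a5 a6 a7 a8 by eventually_elim simp
  thus ?thesis unfolding E_def c2_def c3_def Q_def Pp_def .
qed

end
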